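(* In the FHMA network described below, if the intensity $\lambda$ satisfies $$\lambda<\frac{\ln\frac{3}{2}-\frac{1}{6}\theta r_0^\alpha WN_0}{c_dr_0^d\theta^\delta C(\delta)\left(2^{-\delta}-2^{\delta-1}3^{-\delta}\right)},$$ then the integer number of sub-bands $N_{\mathrm{opt}}\ge 1$ that minimizes the mean local delay $D(N)$ equals $2$.
   Context: Model: transmitters form a homogeneous Poisson point process $\Phi$ of intensity $\lambda>0$ in $\mathbb{R}^d$; the typical receiver is at the origin and its desired transmitter $x_0\in\Phi$ is at distance $r_0>0$; probabilities are under the Palm distribution at $x_0$. Time is slotted. Path loss $\kappa r^{-\alpha}$ with $\alpha>d$, $\delta=d/\alpha\in(0,1)$. Power fading coefficients are i.i.d. exponential with mean $1$ over transmitters and slots, independent of everything. Unit power, always backlogged transmitters. Bandwidth $W$, noise power spectral density $N_r$, $N_0=N_r/\kappa$, SINR threshold $\theta>0$. $c_d$ is the volume of the unit ball in $\mathbb{R}^d$, $C(\delta)=\Gamma(1+\delta)\Gamma(1-\delta)=\frac{\pi\delta}{\sin(\pi\delta)}$. FHMA with $N$ sub-bands: each transmitter $x$ independently picks a sub-band $\mathcal{S}_k(x)$ uniformly from $\{1,\dots,N\}$ in each slot $k$; $\mathrm{SINR}_k=\frac{h_{k,x_0}r_0^{-\alpha}}{WN_0/N+\sum_{x\in\Phi\setminus\{x_0\}}h_{k,x}|x|^{-\alpha}\mathbf{1}(\mathcal{S}_k(x)=\mathcal{S}_k(x_0))}$; a slot is successful if $\mathrm{SINR}_k>\theta$; the local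 delay is the number of slots until the $N$-th successful slot and $D(N)$ is its mean. (The mean equals $D(N)=N\exp\left(\frac{\lambda c_d r_0^d\theta^{\delta}C(\delta)}{(N-1)^{1-\delta}N^{\delta}}+\frac{\theta r_0^\alpha WN_0}{N}\right)$, with $D(1)=\infty$.) *)

theory Defs
  imports "HOL-Analysis.Analysis"
begin

definition C_delta :: "real \<Rightarrow> real" where
  "C_delta \<delta> = Gamma (1 + \<delta>) * Gamma (1 - \<delta>)"

text \<open>Parameters: intensity lam, dimension d, path-loss exponent alpha,
  link distance r0, SINR threshold theta, bandwidth W, N0 = N_r / kappa.
  c_d = unit_ball_vol d is the volume of the unit ball in R^d.\<close>
definition fhma_delay ::
  "real \<Rightarrow> nat \<Rightarrow> real \<Rightarrow> real \<Rightarrow> real \<Rightarrow> real \<Rightarrow> real \<Rightarrow> nat \<Rightarrow> ereal" where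
  "fhma_delay lam d alpha r0 theta W N0 N =
     (let \<delta> = real d / alpha in
      if N \<le> 1 then \<infinity>
      else ereal (real N * exp (lam * unit_ball_vol (real d) * r0 ^ d * theta powr \<delta> * C_delta \<delta>
                     / ((real N - 1) powr (1 - \<delta>) * real N powr \<delta>)
                   + theta * r0 powr alpha * W * N0 / real N)))"

end

theory Submission imports Defs begin

definition hh :: "real \<Rightarrow> nat \<Rightarrow> real" where
  "hh s M = exp (-((1-s)*ln (real M - 1) + s*ln (real M)))"

lemma hh_eq: assumes "M \<ge> 2" shows "1/((real M - 1) powr (1-s) * real M powr s) = hh s M"
proof -
  have "(real M - 1) powr (1-s) * real M powr s = exp((1-s)*ln(real M -1) + s*ln (real M))"
    using assms by (simp add: powr_def exp_add)
  then show ?thesis unfolding hh_def by (simp only: exp_minus inverse_eq_divide)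
qed

lemma x_eq: "2 powr (-s) - 2 powr (s-1) * 3 powr (-s) = hh s 2 - hh s 3"
  by (simp add: hh_def powr_def exp_minus exp_add exp_diff field_simps)

lemma hh_lower: assumes "M \<ge> 2" "s \<le> 1"
  shows "hh s M \<ge> 1/real M * (1 + (1-s)*(ln (real M) - ln (real M - 1)))"
proof -
  have "hh s M = exp (- ln (real M)) * exp ((1-s)*(ln (real M) - ln (real M - 1)))"
    by (simp add: hh_def flip: exp_add) (simp add: algebra_simps)
  also have "exp (- ln (real M)) = 1/real M" using assms by (simp add: exp_minus inverse_eq_divide)
  finally show ?thesis using exp_ge_add_one_self[of "(1-s)*(ln (real M) - ln (real M - 1))"] assms
    by (simp add: divide_right_mono)
qed

lemma hh_pos: "hh s M > 0" by (simp add: hh_def)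

lemma hh_mono_ln: assumes "M \<ge> 2" "s \<le> 1" shows "hh s M \<ge> 1/real M"
proof -
  have "ln (real M - 1) \<le> ln (real M)" using assms by simp
  hence "0 \<le> (1-s)*(ln (real M) - ln (real M - 1))" using assms by simp
  thus ?thesis using hh_lower[OF assms] assms
    by (smt (verit, ccfv_SIG) divide_nonneg_nonneg mult_le_cancel_left1 of_nat_0_le_iff)
qed

lemma h3_upper: assumes "0 \<le> s" "s \<le> 1" shows "hh s 3 \<le> (1-s)/2 + s/3"
proof -
  have "exp ((1 - s) * (- ln 2) + s * (- ln 3)) \<le> (1-s) * exp (- ln 2) + s * exp (- ln (3::real))"
    using convex_onD[OF exp_convex, of s "- ln 2" "- ln 3"] assms by simp
  moreover have "hh s 3 = exp ((1 - s) * (- ln 2) + s * (- ln 3))"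
    unfolding hh_def by (simp add: algebra_simps)
  ultimately show ?thesis by (simp add: exp_minus)
qed

lemma h2_lower: assumes "s \<le> 1" shows "hh s 2 \<ge> 1/2 * (1 + (1-s)*(2/3))"
proof -
  have "hh s 2 \<ge> 1/2 * (1 + (1-s)*(ln 2 - ln 1))" using hh_lower[of 2 s] assms by simp
  moreover have "(1-s)*(2/3) \<le> (1-s)*ln (2::real)" using ln2_ge_two_thirds assms
    by (intro mult_left_mono) auto
  ultimately show ?thesis by (simp add: field_simps)
qed

lemma h4_lower: assumes "s \<le> 1" shows "hh s 4 \<ge> 1/4 * (1 + (1-s)*(1/4))"
proof -
  have "hh s 4 \<ge> 1/4 * (1 + (1-s)*(ln 4 - ln 3))" using hh_lower[of 4 s] assms by simp
  moreover have "ln (3/4) \<le> (3/4::real) - 1" by (rule ln_le_minus_one) simp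
  hence "1/4 \<le> ln 4 - ln (3::real)" by (simp add: ln_div)
  hence "(1-s)*(1/4) \<le> (1-s)*(ln 4 - ln (3::real))" using assms
    by (intro mult_left_mono) auto
  ultimately show ?thesis by (simp add: algebra_simps)
qed

lemma ineqs: assumes "0 < s" "s < 1"
  shows "hh s 3 < hh s 2"
    and "hh s 2 - hh s 4 \<le> 5/3 * (hh s 2 - hh s 3)"
    and "hh s 2 - hh s 5 \<le> 2 * (hh s 2 - hh s 3)"
    and "hh s 2 - hh s 6 \<le> 5/2 * (hh s 2 - hh s 3)"
    and "hh s 2 \<le> 3 * (hh s 2 - hh s 3)"
proof -
  have a: "hh s 2 \<ge> 1/2 * (1 + (1-s)*(2/3))" using h2_lower assms by simp
  have b: "hh s 3 \<le> (1-s)/2 + s/3" using h3_upper assms by simp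
  have c: "hh s 4 \<ge> 1/4 * (1 + (1-s)*(1/4))" using h4_lower assms by simp
  have d: "hh s 5 \<ge> 1/5" using hh_mono_ln[of 5 s] assms by simp
  have e: "hh s 6 \<ge> 1/6" using hh_mono_ln[of 6 s] assms by simp
  show "hh s 3 < hh s 2" using a b assms by (simp add: field_simps)
  show "hh s 2 - hh s 4 \<le> 5/3 * (hh s 2 - hh s 3)" using a b c assms by (simp add: field_simps)
  show "hh s 2 - hh s 5 \<le> 2 * (hh s 2 - hh s 3)" using a b d assms by (simp add: field_simps)
  show "hh s 2 - hh s 6 \<le> 5/2 * (hh s 2 - hh s 3)" using a b e assms by (simp add: field_simps)
  show "hh s 2 \<le> 3 * (hh s 2 - hh s 3)" using a b assms by (simp add: field_simps)
qed

lemma cmp: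
  fixes g2 gM E c :: real and M :: nat
  assumes "g2 - gM \<le> c*E" "E < ln(3/2)" "c>0" "c*ln(3/2) \<le> ln(real M/2)" "M > 0"
  shows "2*exp g2 < real M*exp gM"
proof -
  have "c*E < c*ln(3/2)" using assms by simp
  hence "g2 - gM < ln (real M/2)" using assms by linarith
  hence "exp (g2 - gM) < real M/2" using assms
    by (metis divide_pos_pos exp_less_cancel_iff exp_ln of_nat_0_less_iff zero_less_numeral)
  thus ?thesis by (simp add: exp_diff field_simps)
qed

lemma lnfacts:
  "5/3*ln(3/2::real) \<le> ln (4/2)"
  "2*ln(3/2::real) \<le> ln (5/2)"
  "5/2*ln(3/2::real) \<le> ln (6/2)"
  "3*ln(3/2::real) \<le> ln (7/2)"
proof -
  have "ln ((3/2::real)^5) \<le> ln (2^3)" by (simp add: power_divide)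
  thus "5/3*ln(3/2::real) \<le> ln (4/2)" by (simp only: ln_realpow; simp)
  have "ln ((3/2::real)^2) \<le> ln (5/2)" by (simp add: power_divide)
  thus "2*ln(3/2::real) \<le> ln (5/2)" by (simp only: ln_realpow; simp)
  have "ln ((3/2::real)^5) \<le> ln (3^2)" by (simp add: power_divide)
  thus "5/2*ln(3/2::real) \<le> ln (6/2)" by (simp only: ln_realpow; simp)
  have "ln ((3/2::real)^3) \<le> ln (7/2)" by (simp add: power_divide)
  thus "3*ln(3/2::real) \<le> ln (7/2)" by (simp only: ln_realpow; simp)
qed

theorem corollary1:
  fixes lam alpha r0 theta W Nr kappa :: real and d :: nat
  assumes "d \<ge> 1" and "alpha > real d" and "lam > 0" and "r0 > 0" and "theta > 0"
    and "W > 0" and "Nr \<ge> 0" and "kappa > 0"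
    and "lam < (ln (3/2) - (1/6) * theta * r0 powr alpha * W * (Nr / kappa))
          / (unit_ball_vol (real d) * r0 ^ d * theta powr (real d / alpha) * C_delta (real d / alpha)
             * (2 powr (- (real d / alpha)) - 2 powr (real d / alpha - 1) * 3 powr (- (real d / alpha))))"
  shows "{N :: nat. N \<ge> 1 \<and> (\<forall>M. M \<ge> 1 \<longrightarrow>
            fhma_delay lam d alpha r0 theta W (Nr / kappa) N \<le> fhma_delay lam d alpha r0 theta W (Nr / kappa) M)}
         = {2}"
proof -
  define s where "s = real d / alpha"
  have s0: "0 < s" and s1: "s < 1" using assms(1,2) by (auto simp: s_def field_simps)
  define K where "K = unit_ball_vol (real d) * r0 ^ d * theta powr s * C_delta s"
  have Cpos: "C_delta s > 0" using s0 s1 by (simp add: C_delta_def)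
  have Kpos: "K > 0" unfolding K_def using Cpos assms(4,5) by simp
  define B where "B = theta * r0 powr alpha * W * (Nr / kappa)"
  have B0: "B \<ge> 0" unfolding B_def using assms by simp
  define x where "x = hh s 2 - hh s 3"
  have xpos: "x > 0" using ineqs(1)[OF s0 s1] by (simp add: x_def)
  define E where "E = lam * K * x + B / 6"
  have "lam < (ln (3/2) - B/6) / (K * x)"
    using assms(9) unfolding B_def K_def x_def s_def[symmetric] x_eq by (simp add: algebra_simps)
  hence "lam * (K * x) < ln (3/2) - B/6" using Kpos xpos by (simp add: pos_less_divide_eq)
  hence Elt: "E < ln (3/2)" unfolding E_def by (simp add: algebra_simps)
  define g where "g M = lam * K * hh s M + B / real M" for M :: nat
  define D where "D = fhma_delay lam d alpha r0 theta W (Nr / kappa)"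
  have D1: "D M = \<infinity>" if "M \<le> 1" for M using that by (simp add: D_def fhma_delay_def Let_def)
  have D2: "D M = ereal (real M * exp (g M))" if "M \<ge> 2" for M
  proof -
    have "lam * unit_ball_vol (real d) * r0 ^ d * theta powr s * C_delta s
           / ((real M - 1) powr (1 - s) * real M powr s) = lam * K * (1 / ((real M - 1) powr (1 - s) * real M powr s))"
      by (simp add: K_def)
    also have "\<dots> = lam * K * hh s M" using hh_eq[OF that] by simp
    finally have eq: "lam * unit_ball_vol (real d) * r0 ^ d * theta powr s * C_delta s
           / ((real M - 1) powr (1 - s) * real M powr s) = lam * K * hh s M" .
    have "theta * r0 powr alpha * W * (Nr / kappa) / real M = B / real M" by (simp add: B_def)
    thus ?thesis using that eq unfolding D_def fhma_delay_def Let_def g_def s_def[symmetric] by simp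
  qed
  have key: "g 2 - g M \<le> c * E" if "hh s 2 - hh s M \<le> c * x" "1/2 - 1/real M \<le> c/6" for M c
  proof -
    have LK: "lam * K > 0" using Kpos assms(3) by simp
    have "lam * K * (hh s 2 - hh s M) \<le> lam * K * (c * x)" using that(1) LK by (intro mult_left_mono) auto
    moreover have "B * (1/2 - 1/real M) \<le> B * (c/6)" using that(2) B0 by (intro mult_left_mono) auto
    ultimately have "lam * K * (hh s 2 - hh s M) + B * (1/2 - 1/real M) \<le> lam * K * (c * x) + B * (c/6)"
      by (rule add_mono)
    also have "\<dots> = c * E" unfolding E_def by (simp add: algebra_simps)
    also have "lam * K * (hh s 2 - hh s M) + B * (1/2 - 1/real M) = g 2 - g M"
      unfolding g_def by (simp add: algebra_simps)
    finally show ?thesis .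
  qed
  have less: "2 * exp (g 2) < real M * exp (g M)" if M3: "M \<ge> 3" for M
  proof -
    consider "M = 3" | "M = 4" | "M = 5" | "M = 6" | "M \<ge> 7" using M3 by linarith
    thus ?thesis
    proof cases
      case 1
      show ?thesis unfolding 1 by (rule cmp[OF key[of 3 1] Elt]) (use 1 in \<open>auto simp: x_def\<close>)
    next
      case 2
      show ?thesis unfolding 2 by (rule cmp[OF key[of 4 "5/3"] Elt]) (use 2 ineqs(2)[OF s0 s1] lnfacts(1) in \<open>auto simp: x_def\<close>)
    next
      case 3
      show ?thesis unfolding 3 by (rule cmp[OF key[of 5 2] Elt]) (use 3 ineqs(3)[OF s0 s1] lnfacts(2) in \<open>auto simp: x_def\<close>)
    next
      case 4
      show ?thesis unfolding 4 by (rule cmp[OF key[of 6 "5/2"] Elt]) (use 4 ineqs(4)[OF s0 s1] lnfacts(3) in \<open>auto simp: x_def\<close>)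
    next
      case 5
      have hM: "hh s M > 0" by (rule hh_pos)
      have "ln (7/2) \<le> ln (real M / 2)" using 5 by simp
      hence l: "3 * ln (3/2) \<le> ln (real M / 2)" using lnfacts(4) by linarith
      have "hh s 2 - hh s M \<le> 3 * x" using ineqs(5)[OF s0 s1] hM by (simp add: x_def)
      moreover have "1/2 - 1/real M \<le> 3/6" by simp
      ultimately show ?thesis using 5 by (intro cmp[OF key Elt _ l]) auto
    qed
  qed
  have Dless: "D 2 < D M" if "M \<ge> 3" for M
    using D2[of 2] D2[of M] that less[OF that] by simp
  show ?thesis
  proof (rule set_eqI, rule iffI)
    fix N assume "N \<in> {N :: nat. N \<ge> 1 \<and> (\<forall>M. M \<ge> 1 \<longrightarrow>
            fhma_delay lam d alpha r0 theta W (Nr / kappa) N \<le> fhma_delay lam d alpha r0 theta W (Nr / kappa) M)}"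
    hence N1: "N \<ge> 1" and Nle: "\<And>M. M \<ge> 1 \<Longrightarrow> D N \<le> D M" unfolding D_def by auto
    have "N = 2"
    proof (rule ccontr)
      assume "N \<noteq> 2"
      then consider "N = 1" | "N \<ge> 3" using N1 by linarith
      thus False
      proof cases
        case 1
        hence "D N = \<infinity>" using D1 by simp
        moreover have "D 2 \<noteq> \<infinity>" using D2[of 2] by simp
        ultimately show False using Nle[of 2] by simp
      next
        case 2
        thus False using Nle[of 2] Dless[OF 2] by simp
      qed
    qed
    thus "N \<in> {2}" by simp
  next
    fix N assume "N \<in> {2::nat}"
    hence N2: "N = 2" by simp
    have "D 2 \<le> D M" if M1: "M \<ge> 1" for M
    proof -
      consider "M = 1" | "M = 2" | "M \<ge> 3" using M1 by linarith
      thus ?thesis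
      proof cases
        case 1 thus ?thesis using D1 by simp
      next
        case 2 thus ?thesis by simp
      next
        case 3 thus ?thesis using Dless[OF 3] by simp
      qed
    qed
    thus "N \<in> {N :: nat. N \<ge> 1 \<and> (\<forall>M. M \<ge> 1 \<longrightarrow>
            fhma_delay lam d alpha r0 theta W (Nr / kappa) N \<le> fhma_delay lam d alpha r0 theta W (Nr / kappa) M)}"
      using N2 unfolding D_def by auto
  qed
qed

end
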